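(* In the standing setup (with an arbitrary nonempty finite set of fluids), for every $t_{\mathrm b}\in I$ and every $t\in I$ with $t\ge t_{\mathrm b}$, $$|x(t)|\le |x(t_{\mathrm b})|+\sqrt{2}\,c\,l\,(t-t_{\mathrm b}).$$
   Context: Standing setup. Fix real constants $c>0$ and $l>0$, a nonempty finite index set $A$, and constants $w_\alpha\in[-1,1]$ for $\alpha\in A$. Let $I\subseteq\mathbb{R}$ be an interval and let $x,y_{\mathrm r},y_{\mathrm i},h,z_\alpha$ ($\alpha\in A$) be real $C^1$ functions of $t\in I$ with $h>0$ and $z_\alpha\ge 0$. Define $\xi(t)=x(t)^2+\sum_{\beta\in A}\frac{1+w_\beta}{2}z_\beta(t)^2$. Assume that on $I$: $\dot x=\big[-x+4c\,y_{\mathrm r}y_{\mathrm i}+x\,\xi\big]h$, $\dot y_{\mathrm r}=\big[\xi\,y_{\mathrm r}-c\,x\,y_{\mathrm i}\big]h$, $\dot y_{\mathrm i}=\big[\xi\,y_{\mathrm i}+c\,x\,y_{\mathrm r}\big]h$, $\dot z_\alpha=\big[-\tfrac{1+w_\alpha}{2}+\xi\big]z_\alpha h$, $\dot h=-\xi h^2$, together with the constraints $x^2+4y_{\mathrm r}^2+\sum_{\beta\in A}z_\beta^2=1$ and $y_{\mathrm r}^2+y_{\mathrm i}^2=\frac{l^2}{2h^2}$. (This autonomous system is equivalent to FLRW cosmology of a canonical scalar with potential $m^2f^2(1-\cos(\phi/f))$ coupled to perfect fluids with state parameters $w_\alpha$; there $h=(d-1)H$, $\xi=\epsilon/(d-1)$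 with $\epsilon=-\dot H/H^2$, and $cl=m/\sqrt2$.) *)

theory Defs
  imports "HOL-Analysis.Analysis"
begin

definition C1_with_deriv :: "real set \<Rightarrow> (real \<Rightarrow> real) \<Rightarrow> (real \<Rightarrow> real) \<Rightarrow> bool" where
  "C1_with_deriv I f f' \<longleftrightarrow>
     (\<forall>t\<in>I. (f has_real_derivative f' t) (at t within I)) \<and> continuous_on I f'"

definition xi_fun :: "'a set \<Rightarrow> ('a \<Rightarrow> real) \<Rightarrow> (real \<Rightarrow> real) \<Rightarrow> ('a \<Rightarrow> real \<Rightarrow> real) \<Rightarrow> real \<Rightarrow> real" where
  "xi_fun A w x z t = (x t)\<^sup>2 + (\<Sum>\<beta>\<in>A. (1 + w \<beta>) / 2 * (z \<beta> t)\<^sup>2)"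

end

theory Submission
  imports Defs "HOL-Analysis.Analysis"
begin

theorem lemma1:
  fixes c l :: real and A :: "'a set" and w :: "'a \<Rightarrow> real"
    and I :: "real set"
    and x yr yi h :: "real \<Rightarrow> real" and z :: "'a \<Rightarrow> real \<Rightarrow> real"
  assumes c_pos: "c > 0" and l_pos: "l > 0"
    and A_fin: "finite A" and A_ne: "A \<noteq> {}"
    and w_range: "\<forall>\<alpha>\<in>A. -1 \<le> w \<alpha> \<and> w \<alpha> \<le> 1"
    and I_int: "is_interval I"
    and h_pos: "\<forall>t\<in>I. h t > 0"
    and z_nonneg: "\<forall>\<alpha>\<in>A. \<forall>t\<in>I. z \<alpha> t \<ge> 0"
    and x_ode: "C1_with_deriv I x
       (\<lambda>t. (- x t + 4 * c * yr t * yi t + x t * xi_fun A w x z t) * h t)"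
    and yr_ode: "C1_with_deriv I yr
       (\<lambda>t. (xi_fun A w x z t * yr t - c * x t * yi t) * h t)"
    and yi_ode: "C1_with_deriv I yi
       (\<lambda>t. (xi_fun A w x z t * yi t + c * x t * yr t) * h t)"
    and z_ode: "\<forall>\<alpha>\<in>A. C1_with_deriv I (z \<alpha>)
       (\<lambda>t. (- (1 + w \<alpha>) / 2 + xi_fun A w x z t) * z \<alpha> t * h t)"
    and h_ode: "C1_with_deriv I h (\<lambda>t. - xi_fun A w x z t * (h t)\<^sup>2)"
    and constr1: "\<forall>t\<in>I. (x t)\<^sup>2 + 4 * (yr t)\<^sup>2 + (\<Sum>\<beta>\<in>A. (z \<beta> t)\<^sup>2) = 1"
    and constr2: "\<forall>t\<in>I. (yr t)\<^sup>2 + (yi t)\<^sup>2 = l\<^sup>2 / (2 * (h t)\<^sup>2)"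
  shows "\<forall>tb\<in>I. \<forall>t\<in>I. tb \<le> t \<longrightarrow>
           \<bar>x t\<bar> \<le> \<bar>x tb\<bar> + sqrt 2 * c * l * (t - tb)"
proof (intro ballI impI)
  fix tb t assume tb: "tb \<in> I" and t: "t \<in> I" and le: "tb \<le> t"
  define X' where "X' = (\<lambda>t. (- x t + 4 * c * yr t * yi t + x t * xi_fun A w x z t) * h t)"
  define K where "K = sqrt 2 * c * l"
  define \<sigma> :: real where "\<sigma> = (if x t \<ge> 0 then 1 else -1)"
  have sig1: "\<bar>x t\<bar> = \<sigma> * x t" and sig2: "\<sigma> * x tb \<le> \<bar>x tb\<bar>" and sig3: "\<bar>\<sigma>\<bar> = 1"
    by (auto simp: \<sigma>_def)
  have sub: "{tb..t} \<subseteq> I" using I_int tb t by (meson is_interval_1 atLeastAtMost_iff subsetI)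
  have xder: "\<forall>s\<in>I. (x has_real_derivative X' s) (at s within I)"
    using x_ode by (simp add: C1_with_deriv_def X'_def)
  have bound: "\<sigma> * X' s \<le> K" if sI: "s \<in> I" and pos: "\<sigma> * x s > 0" for s
  proof -
    have c1: "(x s)\<^sup>2 + 4 * (yr s)\<^sup>2 + (\<Sum>\<beta>\<in>A. (z \<beta> s)\<^sup>2) = 1" using constr1 sI by auto
    have c2: "(yr s)\<^sup>2 + (yi s)\<^sup>2 = l\<^sup>2 / (2 * (h s)\<^sup>2)" using constr2 sI by auto
    have hp: "h s > 0" using h_pos sI by auto
    have sz: "(\<Sum>\<beta>\<in>A. (1 + w \<beta>) / 2 * (z \<beta> s)\<^sup>2) \<le> (\<Sum>\<beta>\<in>A. (z \<beta> s)\<^sup>2)"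
    proof (rule sum_mono)
      fix \<beta> assume "\<beta> \<in> A"
      then have "(1 + w \<beta>) / 2 \<le> 1" using w_range by auto
      then show "(1 + w \<beta>) / 2 * (z \<beta> s)\<^sup>2 \<le> (z \<beta> s)\<^sup>2"
        using mult_right_mono[of "(1 + w \<beta>) / 2" 1 "(z \<beta> s)\<^sup>2"] by simp
    qed
    have sz0: "(\<Sum>\<beta>\<in>A. (z \<beta> s)\<^sup>2) \<ge> 0" by (simp add: sum_nonneg)
    have xi1: "xi_fun A w x z s \<le> 1" unfolding xi_fun_def using c1 sz
      by (smt (verit) zero_le_power2)
    have t1: "\<sigma> * x s * (xi_fun A w x z s - 1) * h s \<le> 0"
      using pos xi1 hp by (simp add: mult_nonpos_nonneg mult_nonneg_nonpos)
    have yr2: "(2 * \<bar>yr s\<bar>)\<^sup>2 \<le> 1\<^sup>2" using c1 sz0 by (simp add: power_mult_distrib) (smt (verit) zero_le_power2)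
    have yr3: "2 * \<bar>yr s\<bar> \<le> 1" using power2_le_imp_le[OF yr2] by simp
    have yi2: "(sqrt 2 * \<bar>yi s\<bar> * h s)\<^sup>2 \<le> l\<^sup>2"
    proof -
      have "(yi s)\<^sup>2 \<le> l\<^sup>2 / (2 * (h s)\<^sup>2)" using c2 by (smt (verit) zero_le_power2)
      then have "(yi s)\<^sup>2 * (2 * (h s)\<^sup>2) \<le> l\<^sup>2" using hp by (simp add: pos_le_divide_eq)
      then show ?thesis by (simp add: power_mult_distrib algebra_simps)
    qed
    have yi3: "sqrt 2 * \<bar>yi s\<bar> * h s \<le> l" using power2_le_imp_le[OF yi2] l_pos by simp
    have "4 * c * \<sigma> * yr s * yi s * h s \<le> 4 * c * \<bar>yr s\<bar> * \<bar>yi s\<bar> * h s"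
    proof -
      have "\<sigma> * yr s * yi s \<le> \<bar>\<sigma> * yr s * yi s\<bar>" by (rule abs_ge_self)
      also have "\<dots> = \<bar>yr s\<bar> * \<bar>yi s\<bar>" using sig3 by (simp add: abs_mult)
      finally have "\<sigma> * yr s * yi s \<le> \<bar>yr s\<bar> * \<bar>yi s\<bar>" .
      then have "(4*c*h s) * (\<sigma> * yr s * yi s) \<le> (4*c*h s) * (\<bar>yr s\<bar> * \<bar>yi s\<bar>)"
        using c_pos hp by (intro mult_left_mono) auto
      then show ?thesis by (simp add: algebra_simps)
    qed
    also have "\<dots> = sqrt 2 * c * ((2 * \<bar>yr s\<bar>) * (sqrt 2 * \<bar>yi s\<bar> * h s))"
      by (simp add: algebra_simps)
    also have "\<dots> \<le> sqrt 2 * c * (1 * l)"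
      using yr3 yi3 c_pos hp by (intro mult_left_mono mult_mono) auto
    finally have t2: "4 * c * \<sigma> * yr s * yi s * h s \<le> K" by (simp add: K_def)
    have "\<sigma> * X' s = \<sigma> * x s * (xi_fun A w x z s - 1) * h s + 4 * c * \<sigma> * yr s * yi s * h s"
      by (simp add: X'_def algebra_simps)
    then show ?thesis using t1 t2 by linarith
  qed
  have contI: "continuous_on I x"
    using xder unfolding continuous_on_eq_continuous_within by (metis DERIV_continuous)
  have cont: "continuous_on {tb..t} x" using continuous_on_subset[OF contI sub] .
  define T where "T = {s\<in>{tb..t}. \<sigma> * x s \<le> 0} \<union> {tb}"
  have "closed {s\<in>{tb..t}. \<sigma> * x s \<le> (\<lambda>_. 0) s}"
    by (rule continuous_on_closed_Collect_le) (auto intro!: continuous_intros cont)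
  then have "closed T" unfolding T_def by auto
  moreover have "bounded T" unfolding T_def
    by (rule bounded_Un[THEN iffD2]) (auto intro: bounded_subset[OF bounded_closed_interval])
  ultimately have "compact T" by (simp add: compact_eq_bounded_closed)
  moreover have "T \<noteq> {}" by (simp add: T_def)
  ultimately obtain s0 where s0T: "s0 \<in> T" and s0max: "\<forall>s\<in>T. s \<le> s0"
    using compact_attains_sup by blast
  have s0r: "tb \<le> s0" "s0 \<le> t" using s0T le by (auto simp: T_def)
  have s0v: "\<sigma> * x s0 \<le> \<bar>x tb\<bar>" using s0T sig2 by (auto simp: T_def)
  have K0: "K \<ge> 0" using c_pos l_pos by (simp add: K_def)
  show "\<bar>x t\<bar> \<le> \<bar>x tb\<bar> + sqrt 2 * c * l * (t - tb)"
  proof (cases "s0 = t")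
    case True
    then show ?thesis using sig1 s0v K0 le unfolding K_def[symmetric]
      by (smt (verit) mult_nonneg_nonneg)
  next
    case False
    then have lt: "s0 < t" using s0r by auto
    have "\<exists>\<xi>\<in>{s0<..<t}. (\<lambda>s. \<sigma> * x s) t - (\<lambda>s. \<sigma> * x s) s0 = (\<lambda>s d. d * (\<sigma> * X' s)) \<xi> (t - s0)"
    proof (rule mvt_simple[OF lt])
      fix s assume "s0 \<le> s" "s \<le> t"
      then have sI: "s \<in> I" and ss: "{s0..t} \<subseteq> I" using sub s0r by auto
      have "(x has_real_derivative X' s) (at s within {s0..t})"
        using xder sI ss by (meson has_field_derivative_subset)
      then have "((\<lambda>s. \<sigma> * x s) has_real_derivative \<sigma> * X' s) (at s within {s0..t})"
        by (rule DERIV_cmult)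
      then show "((\<lambda>s. \<sigma> * x s) has_derivative (\<lambda>d. d * (\<sigma> * X' s))) (at s within {s0..t})"
        by (simp add: has_field_derivative_def mult.commute[of _ "\<sigma> * X' s"])
    qed
    then obtain \<xi> where \<xi>: "s0 < \<xi>" "\<xi> < t" and eq: "\<sigma> * x t - \<sigma> * x s0 = (t - s0) * (\<sigma> * X' \<xi>)"
      by auto
    have "\<xi> \<notin> T" using s0max \<xi> by force
    then have "\<sigma> * x \<xi> > 0" using \<xi> s0r by (auto simp: T_def)
    moreover have "\<xi> \<in> I" using sub \<xi> s0r by auto
    ultimately have "\<sigma> * X' \<xi> \<le> K" using bound by auto
    then have "(t - s0) * (\<sigma> * X' \<xi>) \<le> (t - s0) * K" using lt by (intro mult_left_mono) auto
    also have "\<dots> \<le> (t - tb) * K" using s0r K0 by (intro mult_right_mono) auto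
    finally show ?thesis using eq sig1 s0v unfolding K_def by (simp add: algebra_simps)
  qed
qed

end
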